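(* Let $\mathbb{K}=(G,M,I)$ be a finite formal context, and let $\cdot'$ denote derivation in $\mathbb{K}$ and $\cdot^{!}$ derivation in $BC(\mathbb{K})$. For every object $g\in G$, setting $\overline{A}:=\{\overline m\in\overline{\mathcal{M}(M)}\mid (g,m)\notin I\}$, we have $\overline{A}^{!}=g^{!}=g'$. In particular every intent of $\mathbb{K}$ is an intent of $BC(\mathbb{K})$, and the objects of $G$ are reducible in $BC(\mathbb{K})$ in the sense that the object intents of $G$ are intersections of object intents of new objects $\overline m$.
   Context: For a formal context $\mathbb{K}=(G,M,I)$, derivation operators: $A'=\{m\in M\mid\forall g\in A:(g,m)\in I\}$, $B'=\{g\in G\mid\forall m\in B:(g,m)\in I\}$; intents are sets $B\subseteq M$ with $B''=B$; $g'$ abbreviates $\{g\}'$. For $m,n\in M$ write $m\ge_{\mathbb{K}}n$ iff $\{m\}'\supseteq\{n\}'$. Let $\mathcal{M}(M)$ be the set of attributes $m$ whose attribute concept $(\{m\}',\{m\}'')$ is meet-irreducible in the concept lattice of $\mathbb{K}$, and $\overline{\mathcal{M}(M)}=\{\overline m\mid m\in\mathcal{M}(M)\}$ new elements. The Birkhoff completion of $\mathbb{K}$ is $BC(\mathbb{K}):=\big(G\cup\overline{\mathcal{M}(M)},M,I\cup\{(\overline m,n)\in\overline{\mathcal{M}(M)}\times M\mid m\not\ge_{\mathbb{K}}n\}\big)$. For $\overline A\subseteq\overline{\mathcal{M}(M)}$, $\overline A^{!}=\{n\in M\mid \forall\overline m\in\overline A: m\not\ge_{\mathbb{K}} n\}$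 (with $\emptyset^{!}=M$). *)

theory Defs
  imports Main
begin

definition intent_of :: "'m set \<Rightarrow> ('g \<times> 'm) set \<Rightarrow> 'g set \<Rightarrow> 'm set" where
  "intent_of M I A = {m \<in> M. \<forall>g\<in>A. (g, m) \<in> I}"

definition extent_of :: "'g set \<Rightarrow> ('g \<times> 'm) set \<Rightarrow> 'm set \<Rightarrow> 'g set" where
  "extent_of G I B = {g \<in> G. \<forall>m\<in>B. (g, m) \<in> I}"

definition is_intent :: "'g set \<Rightarrow> 'm set \<Rightarrow> ('g \<times> 'm) set \<Rightarrow> 'm set \<Rightarrow> bool" where
  "is_intent G M I B \<longleftrightarrow> B \<subseteq> M \<and> intent_of M I (extent_of G I B) = B"

definition concepts :: "'g set \<Rightarrow> 'm set \<Rightarrow> ('g \<times> 'm) set \<Rightarrow> ('g set \<times> 'm set) set" where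
  "concepts G M I = {(A, B). A \<subseteq> G \<and> B \<subseteq> M \<and> intent_of M I A = B \<and> extent_of G I B = A}"

definition concept_le :: "('g set \<times> 'm set) \<Rightarrow> ('g set \<times> 'm set) \<Rightarrow> bool" where
  "concept_le x y \<longleftrightarrow> fst x \<subseteq> fst y"

definition is_inf_in :: "'a set \<Rightarrow> ('a \<Rightarrow> 'a \<Rightarrow> bool) \<Rightarrow> 'a \<Rightarrow> 'a \<Rightarrow> 'a \<Rightarrow> bool" where
  "is_inf_in P le y z x \<longleftrightarrow> x \<in> P \<and> le x y \<and> le x z \<and> (\<forall>w\<in>P. le w y \<and> le w z \<longrightarrow> le w x)"

definition meet_irreducible_in :: "'a set \<Rightarrow> ('a \<Rightarrow> 'a \<Rightarrow> bool) \<Rightarrow> 'a \<Rightarrow> bool" where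
  "meet_irreducible_in P le x \<longleftrightarrow> x \<in> P \<and> (\<exists>y\<in>P. \<not> le y x) \<and>
     (\<forall>y\<in>P. \<forall>z\<in>P. is_inf_in P le y z x \<longrightarrow> x = y \<or> x = z)"

definition attr_ge :: "'g set \<Rightarrow> ('g \<times> 'm) set \<Rightarrow> 'm \<Rightarrow> 'm \<Rightarrow> bool" where
  "attr_ge G I m n \<longleftrightarrow> extent_of G I {n} \<subseteq> extent_of G I {m}"

definition mirr_attrs :: "'g set \<Rightarrow> 'm set \<Rightarrow> ('g \<times> 'm) set \<Rightarrow> 'm set" where
  "mirr_attrs G M I = {m \<in> M. meet_irreducible_in (concepts G M I) concept_le
       (extent_of G I {m}, intent_of M I (extent_of G I {m}))}"

text \<open>Birkhoff completion: old objects g are Inl g, new objects mbar are Inr m.\<close>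
definition BC_objects :: "'g set \<Rightarrow> 'm set \<Rightarrow> ('g \<times> 'm) set \<Rightarrow> ('g + 'm) set" where
  "BC_objects G M I = Inl ` G \<union> Inr ` mirr_attrs G M I"

definition BC_incidence :: "'g set \<Rightarrow> 'm set \<Rightarrow> ('g \<times> 'm) set \<Rightarrow> (('g + 'm) \<times> 'm) set" where
  "BC_incidence G M I =
     {(Inl g, m) | g m. (g, m) \<in> I} \<union>
     {(Inr m, n) | m n. m \<in> mirr_attrs G M I \<and> n \<in> M \<and> \<not> attr_ge G I m n}"

end

theory Submission
  imports Defs
begin

lemma ext_int_ext:
  assumes "B \<subseteq> M"
  shows "extent_of G I (intent_of M I (extent_of G I B)) = extent_of G I B"
  using assms unfolding extent_of_def intent_of_def by blast

lemma key:
  fixes G :: "'g set" and M :: "'m set" and I :: "('g \<times> 'm) set"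
  assumes fin: "finite M" and IGM: "I \<subseteq> G \<times> M" and gG: "g \<in> G" and nM: "n \<in> M"
    and gn: "(g, n) \<notin> I"
  shows "\<exists>m\<in>mirr_attrs G M I. (g, m) \<notin> I \<and> attr_ge G I m n"
proof -
  define E where "E = (\<lambda>m. extent_of G I {m})"
  have Eeq: "\<And>m. E m = {h\<in>G. (h,m)\<in>I}" unfolding E_def extent_of_def by auto
  define S where "S = {m\<in>M. E n \<subseteq> E m \<and> g \<notin> E m}"
  have nS: "n \<in> S" using nM gn unfolding S_def Eeq by auto
  have "finite (E ` S)" using fin unfolding S_def by auto
  from finite_has_maximal2[OF this, of "E n"] nS
  obtain X where X: "X \<in> E ` S" "E n \<subseteq> X" "\<forall>b\<in>E ` S. X \<subseteq> b \<longrightarrow> X = b" by auto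
  then obtain m where mS: "m \<in> S" and Xm: "X = E m" by auto
  have mM: "m \<in> M" and nm: "E n \<subseteq> E m" and gm: "g \<notin> E m" using mS unfolding S_def by auto
  have max: "\<And>b. b \<in> S \<Longrightarrow> E m \<subseteq> E b \<Longrightarrow> E m = E b" using X Xm by auto
  define P where "P = concepts G M I"
  define c where "c = (E m, intent_of M I (E m))"
  have cP: "c \<in> P" unfolding c_def P_def concepts_def
    using ext_int_ext[of "{m}" M G I] mM unfolding E_def
    by (auto simp: extent_of_def intent_of_def)
  have topP: "(G, intent_of M I G) \<in> P" unfolding P_def concepts_def
    by (auto simp: extent_of_def intent_of_def)
  have ntop: "\<not> concept_le (G, intent_of M I G) c"
    using gG gm unfolding concept_le_def c_def by auto
  have above: "g \<in> fst y" if yP: "y \<in> P" and le: "concept_le c y" and ne: "y \<noteq> c" for y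
  proof -
    obtain A B where y: "y = (A, B)" by (cases y)
    have AG: "A \<subseteq> G" and BM: "B \<subseteq> M" and iA: "intent_of M I A = B" and eB: "extent_of G I B = A"
      using yP unfolding y P_def concepts_def by auto
    have mA: "E m \<subseteq> A" using le unfolding y c_def concept_le_def by auto
    have strict: "E m \<noteq> A"
    proof
      assume "E m = A"
      then have "y = c" using iA unfolding y c_def by auto
      with ne show False by simp
    qed
    show ?thesis
    proof (rule ccontr)
      assume "g \<notin> fst y"
      then have "g \<notin> A" using y by simp
      then obtain b where bB: "b \<in> B" and gb: "(g, b) \<notin> I"
        using gG eB unfolding extent_of_def by auto
      have bM: "b \<in> M" using bB BM by auto
      have Ab: "A \<subseteq> E b" using eB bB unfolding Eeq extent_of_def by auto
      have "b \<in> S" using bM nm mA Ab gb unfolding S_def Eeq by auto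
      then have "E m = E b" using max mA Ab by auto
      then show False using mA Ab strict by auto
    qed
  qed
  have irr: "c = y \<or> c = z" if yP: "y \<in> P" and zP: "z \<in> P" and inf: "is_inf_in P concept_le y z c" for y z
  proof (rule ccontr)
    assume "\<not> (c = y \<or> c = z)"
    then have gy: "g \<in> fst y" and gz: "g \<in> fst z"
      using above[OF yP] above[OF zP] inf unfolding is_inf_in_def by metis+
    define w where "w = (extent_of G I (intent_of M I {g}), intent_of M I {g})"
    have wP: "w \<in> P" unfolding w_def P_def concepts_def using gG
      by (auto simp: extent_of_def intent_of_def)
    have lew: "concept_le w x" if xP: "x \<in> P" and gx: "g \<in> fst x" for x
    proof -
      obtain A B where x: "x = (A, B)" by (cases x)
      have BM: "B \<subseteq> M" and eB: "extent_of G I B = A"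
        using xP unfolding x P_def concepts_def by auto
      have "B \<subseteq> intent_of M I {g}" using gx eB BM unfolding x extent_of_def intent_of_def by auto
      then show ?thesis unfolding w_def concept_le_def x using eB[symmetric]
        by (auto simp: extent_of_def)
    qed
    have "concept_le w c" using inf wP lew[OF yP gy] lew[OF zP gz] unfolding is_inf_in_def by auto
    moreover have "g \<in> fst w" using gG unfolding w_def by (auto simp: extent_of_def intent_of_def)
    ultimately show False using gm unfolding concept_le_def c_def by auto
  qed
  have "meet_irreducible_in P concept_le c"
    unfolding meet_irreducible_in_def using cP topP ntop irr by blast
  then have "m \<in> mirr_attrs G M I" using mM unfolding mirr_attrs_def P_def c_def E_def by auto
  moreover have "(g, m) \<notin> I" using gm gG unfolding Eeq by auto
  moreover have "attr_ge G I m n" using nm unfolding attr_ge_def E_def .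
  ultimately show ?thesis by blast
qed

theorem mainTheorem6:
  fixes G :: "'g set" and M :: "'m set" and I :: "('g \<times> 'm) set"
  assumes "finite G" and "finite M" and "I \<subseteq> G \<times> M"
  shows "(\<forall>g\<in>G.
           intent_of M (BC_incidence G M I) (Inr ` {m \<in> mirr_attrs G M I. (g, m) \<notin> I})
             = intent_of M (BC_incidence G M I) {Inl g}
         \<and> intent_of M (BC_incidence G M I) {Inl g} = intent_of M I {g})
       \<and> (\<forall>B. is_intent G M I B \<longrightarrow> is_intent (BC_objects G M I) M (BC_incidence G M I) B)"
proof (intro conjI ballI allI impI)
  fix g assume gG: "g \<in> G"
  show mid: "intent_of M (BC_incidence G M I) {Inl g} = intent_of M I {g}"
    unfolding intent_of_def BC_incidence_def by auto
  show "intent_of M (BC_incidence G M I) (Inr ` {m \<in> mirr_attrs G M I. (g, m) \<notin> I})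
             = intent_of M (BC_incidence G M I) {Inl g}"
    unfolding mid
  proof
    show "intent_of M (BC_incidence G M I) (Inr ` {m \<in> mirr_attrs G M I. (g, m) \<notin> I})
          \<subseteq> intent_of M I {g}"
    proof
      fix n assume n: "n \<in> intent_of M (BC_incidence G M I) (Inr ` {m \<in> mirr_attrs G M I. (g, m) \<notin> I})"
      then have nM: "n \<in> M" unfolding intent_of_def by auto
      show "n \<in> intent_of M I {g}"
      proof (rule ccontr)
        assume "n \<notin> intent_of M I {g}"
        then have "(g, n) \<notin> I" using nM unfolding intent_of_def by auto
        from key[OF assms(2,3) gG nM this] obtain m where
          "m \<in> mirr_attrs G M I" "(g, m) \<notin> I" "attr_ge G I m n" by blast
        then show False using n unfolding intent_of_def BC_incidence_def by auto
      qed
    qed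
  next
    show "intent_of M I {g} \<subseteq>
          intent_of M (BC_incidence G M I) (Inr ` {m \<in> mirr_attrs G M I. (g, m) \<notin> I})"
      using gG unfolding intent_of_def BC_incidence_def attr_ge_def extent_of_def by auto
  qed
next
  fix B assume B: "is_intent G M I B"
  have BM: "B \<subseteq> M" and eq: "intent_of M I (extent_of G I B) = B"
    using B unfolding is_intent_def by auto
  have "intent_of M (BC_incidence G M I) (extent_of (BC_objects G M I) (BC_incidence G M I) B) \<subseteq>
        intent_of M I (extent_of G I B)"
    unfolding intent_of_def extent_of_def BC_incidence_def BC_objects_def by auto
  moreover have "B \<subseteq> intent_of M (BC_incidence G M I) (extent_of (BC_objects G M I) (BC_incidence G M I) B)"
    using BM unfolding intent_of_def extent_of_def by auto
  ultimately show "is_intent (BC_objects G M I) M (BC_incidence G M I) B"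
    unfolding is_intent_def using BM eq by auto
qed

end
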